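(* There is an absolute constant $d$ such that for every $N\ge1$ and every randomized XOR decision tree that computes ${\rm MAJORITY}$ exactly on $N$-bit inputs, there exists an input $X\in\{0,1\}^N$ on which the expected number of queries made is at least $\frac23N-\sqrt{\frac{8N}{9\pi}}-d$.
   Context: For $X=X_0X_1\cdots X_{N-1}\in\{0,1\}^N$, ${\rm MAJORITY}(X)=0$ if $X$ contains more zeros than ones and ${\rm MAJORITY}(X)=1$ otherwise. An XOR decision tree on $N$-bit inputs is a deterministic adaptive algorithm that on input $X$ makes a sequence of queries, each either a single bit $X_i$ or $X_i\oplus X_j$ ($0\le i,j\le N-1$), each chosen depending on previous answers, and then outputs a value. A randomized XOR decision tree is a probability distribution over XOR decision trees. It computes $f$ exactly if on every input $X$ it outputs $f(X)$ with probability $1$. *)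

theory Defs
  imports "HOL-Probability.Probability"
begin

text \<open>Inputs are bit strings X = X_0 ... X_{N-1}, represented as bool lists of
length N (True = 1, False = 0).\<close>

definition majority :: "bool list \<Rightarrow> bool" where
  "majority X = (if length (filter Not X) > length (filter id X) then False else True)"

datatype query = Bit nat | Xor nat nat

fun answer :: "query \<Rightarrow> bool list \<Rightarrow> bool" where
  "answer (Bit i) X = X ! i"
| "answer (Xor i j) X = (X ! i \<noteq> X ! j)"

fun query_ok :: "nat \<Rightarrow> query \<Rightarrow> bool" where
  "query_ok N (Bit i) = (i < N)"
| "query_ok N (Xor i j) = (i < N \<and> j < N)"

datatype xtree = Leaf bool | Node query xtree xtree

fun valid_tree :: "nat \<Rightarrow> xtree \<Rightarrow> bool" where
  "valid_tree N (Leaf b) = True"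
| "valid_tree N (Node q t0 t1) = (query_ok N q \<and> valid_tree N t0 \<and> valid_tree N t1)"

fun run :: "xtree \<Rightarrow> bool list \<Rightarrow> bool" where
  "run (Leaf b) X = b"
| "run (Node q t0 t1) X = (if answer q X then run t1 X else run t0 X)"

fun cost :: "xtree \<Rightarrow> bool list \<Rightarrow> nat" where
  "cost (Leaf b) X = 0"
| "cost (Node q t0 t1) X = Suc (if answer q X then cost t1 X else cost t0 X)"

text \<open>A randomized XOR decision tree on N-bit inputs is a probability distribution
over (valid) XOR decision trees; the type xtree is countable, so a pmf is fully general.\<close>
definition rand_computes_exactly :: "nat \<Rightarrow> xtree pmf \<Rightarrow> (bool list \<Rightarrow> bool) \<Rightarrow> bool" where
  "rand_computes_exactly N D f \<longleftrightarrow>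
     (\<forall>T\<in>set_pmf D. valid_tree N T) \<and>
     (\<forall>X. length X = N \<longrightarrow> measure_pmf.prob D {T. run T X = f X} = 1)"

definition expected_cost :: "xtree pmf \<Rightarrow> bool list \<Rightarrow> ennreal" where
  "expected_cost D X = (\<integral>\<^sup>+ T. ennreal (real (cost T X)) \<partial>measure_pmf D)"

end

theory Submission
  imports Defs "HOL-Analysis.Gamma_Function"
begin

definition flip :: "nat set \<Rightarrow> bool list \<Rightarrow> bool list" where
  "flip U X = map (\<lambda>i. X!i \<noteq> (i \<in> U)) [0..<length X]"

lemma length_flip[simp]: "length (flip U X) = length X"
  unfolding flip_def by simp

lemma nth_flip[simp]: "i < length X \<Longrightarrow> flip U X ! i = (X!i \<noteq> (i \<in> U))"
  unfolding flip_def by simp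

lemma flip_flip: "flip U (flip V X) = flip ((U - V) \<union> (V - U)) X"
  by (rule nth_equalityI) auto

lemma flip_Un: "U \<inter> V = {} \<Longrightarrow> flip U (flip V X) = flip (U \<union> V) X"
proof -
  assume "U \<inter> V = {}"
  then have "(U - V) \<union> (V - U) = U \<union> V" by blast
  then show ?thesis unfolding flip_flip by simp
qed

lemma flip_empty[simp]: "flip {} X = X"
  by (rule nth_equalityI) auto

definition sg :: "bool \<Rightarrow> int" where "sg b = (if b then 1 else -1)"

definition Ssum :: "bool list \<Rightarrow> int" where "Ssum X = (\<Sum>i<length X. sg (X!i))"

definition eC :: "nat set \<Rightarrow> bool list \<Rightarrow> int" where "eC C X = (\<Sum>i\<in>C. sg (X!i))"

lemma majority_S: "majority X \<longleftrightarrow> Ssum X \<ge> 0"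
proof -
  define T where "T = {i. i < length X \<and> X!i}"
  define F where "F = {i. i < length X \<and> \<not> X!i}"
  have fin: "finite T" "finite F" unfolding T_def F_def by auto
  have u: "{..<length X} = T \<union> F" unfolding T_def F_def by auto
  have dj: "T \<inter> F = {}" unfolding T_def F_def by auto
  have "Ssum X = (\<Sum>i\<in>T. sg (X!i)) + (\<Sum>i\<in>F. sg (X!i))"
    unfolding Ssum_def u by (rule sum.union_disjoint[OF fin dj])
  also have "(\<Sum>i\<in>T. sg (X!i)) = (\<Sum>i\<in>T. 1)" by (rule sum.cong) (auto simp: T_def sg_def)
  also have "(\<Sum>i\<in>F. sg (X!i)) = (\<Sum>i\<in>F. -1)" by (rule sum.cong) (auto simp: F_def sg_def)
  finally have "Ssum X = int (card T) - int (card F)" by simp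
  moreover have "length (filter id X) = card T" "length (filter Not X) = card F"
    unfolding T_def F_def by (simp_all add: length_filter_conv_card)
  ultimately show ?thesis unfolding majority_def by (simp add: not_less)
qed

lemma S_flip: assumes "C \<subseteq> {..<length X}" shows "Ssum (flip C X) = Ssum X - 2 * eC C X"
proof -
  have fC: "finite C" using assms finite_subset by blast
  define R where "R = {..<length X} - C"
  have fR: "finite R" unfolding R_def by simp
  have u: "{..<length X} = C \<union> R" using assms unfolding R_def by auto
  have dj: "C \<inter> R = {}" unfolding R_def by auto
  have a: "Ssum (flip C X) = (\<Sum>i\<in>C. sg (flip C X!i)) + (\<Sum>i\<in>R. sg (flip C X!i))"
    unfolding Ssum_def length_flip u by (rule sum.union_disjoint[OF fC fR dj])
  have b: "Ssum X = (\<Sum>i\<in>C. sg (X!i)) + (\<Sum>i\<in>R. sg (X!i))"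
    unfolding Ssum_def u by (rule sum.union_disjoint[OF fC fR dj])
  have c: "(\<Sum>i\<in>C. sg (flip C X!i)) = (\<Sum>i\<in>C. - sg (X!i))"
  proof (rule sum.cong)
    fix i assume "i \<in> C"
    then have "i < length X" using assms by auto
    then show "sg (flip C X ! i) = - sg (X ! i)" using \<open>i \<in> C\<close> by (simp add: sg_def)
  qed simp
  have d: "(\<Sum>i\<in>R. sg (flip C X!i)) = (\<Sum>i\<in>R. sg (X!i))"
  proof (rule sum.cong)
    fix i assume "i \<in> R"
    then have "i < length X" "i \<notin> C" unfolding R_def by auto
    then show "sg (flip C X ! i) = sg (X ! i)" by simp
  qed simp
  show ?thesis using a b c d unfolding eC_def sum_negf by linarith
qed

lemma eC_flip_disj: assumes "C' \<inter> C = {}" "C' \<subseteq> {..<length X}" shows "eC C' (flip C X) = eC C' X"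
  unfolding eC_def
proof (rule sum.cong)
  fix i assume "i \<in> C'"
  then have "i < length X" "i \<notin> C" using assms by auto
  then show "sg (flip C X ! i) = sg (X ! i)" by simp
qed simp

lemma eC_flip_self: assumes "C \<subseteq> {..<length X}" shows "eC C (flip C X) = - eC C X"
  unfolding eC_def sum_negf[symmetric]
proof (rule sum.cong)
  fix i assume "i \<in> C"
  then have "i < length X" using assms by auto
  then show "sg (flip C X ! i) = - sg (X ! i)" using \<open>i \<in> C\<close> by (simp add: sg_def)
qed simp

lemma eC_Un: assumes "C1 \<inter> C2 = {}" "finite C1" "finite C2" shows "eC (C1 \<union> C2) X = eC C1 X + eC C2 X"
  unfolding eC_def by (rule sum.union_disjoint) (use assms in auto)

lemma pow_insert_sum:
  assumes "finite Cs" "C \<notin> Cs"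
  shows "(\<Sum>D\<in>Pow (insert C Cs). g D) = (\<Sum>D\<in>Pow Cs. g D) + (\<Sum>D\<in>Pow Cs. g (insert C D))"
proof -
  have "(\<Sum>D\<in>Pow (insert C Cs). g D) = (\<Sum>D\<in>Pow Cs. g D) + (\<Sum>D\<in>insert C ` Pow Cs. g D)"
    unfolding Pow_insert by (rule sum.union_disjoint) (use assms in auto)
  also have "(\<Sum>D\<in>insert C ` Pow Cs. g D) = (\<Sum>D\<in>Pow Cs. g (insert C D))"
  proof (rule sum.reindex[unfolded comp_def])
    show "inj_on (insert C) (Pow Cs)"
    proof (rule inj_onI)
      fix A B assume A: "A \<in> Pow Cs" and B: "B \<in> Pow Cs" and eq: "insert C A = insert C B"
      have "C \<notin> A" "C \<notin> B" using A B assms(2) by auto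
      then have "A = insert C A - {C}" "B = insert C B - {C}" by auto
      then show "A = B" using eq by simp
    qed
  qed
  finally show ?thesis .
qed

definition wfam :: "nat \<Rightarrow> nat set set \<Rightarrow> bool" where
  "wfam N Cs \<longleftrightarrow> finite Cs \<and> (\<forall>C\<in>Cs. C \<subseteq> {..<N}) \<and> (\<forall>A\<in>Cs. \<forall>B\<in>Cs. A \<noteq> B \<longrightarrow> A \<inter> B = {})"

definition Fx :: "bool list \<Rightarrow> nat set set \<Rightarrow> bool list" where "Fx x D = flip (\<Union>D) x"

lemma wfam_subset: "wfam N Cs \<Longrightarrow> Cs' \<subseteq> Cs \<Longrightarrow> wfam N Cs'"
proof -
  assume a: "wfam N Cs" "Cs' \<subseteq> Cs"
  then have "finite Cs'" unfolding wfam_def using finite_subset by blast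
  moreover have "\<forall>C\<in>Cs'. C \<subseteq> {..<N}" using a unfolding wfam_def by auto
  moreover have "\<forall>A\<in>Cs'. \<forall>B\<in>Cs'. A \<noteq> B \<longrightarrow> A \<inter> B = {}"
  proof (intro ballI impI)
    fix A B assume "A \<in> Cs'" "B \<in> Cs'" "A \<noteq> B"
    then have "A \<in> Cs" "B \<in> Cs" "A \<noteq> B" using a(2) by auto
    then show "A \<inter> B = {}" using a(1) unfolding wfam_def by blast
  qed
  ultimately show ?thesis unfolding wfam_def by blast
qed

lemma Fx_insert:
  assumes "wfam N Cs" "C \<in> Cs" "D \<subseteq> Cs - {C}"
  shows "Fx x (insert C D) = Fx (flip C x) D"
proof -
  have disj: "\<forall>A\<in>Cs. \<forall>B\<in>Cs. A \<noteq> B \<longrightarrow> A \<inter> B = {}" using assms(1) unfolding wfam_def by simp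
  have "B \<inter> C = {}" if "B \<in> D" for B
  proof -
    have "B \<in> Cs" "B \<noteq> C" using that assms(3) by auto
    then show ?thesis using disj assms(2) by blast
  qed
  then have "\<Union>D \<inter> C = {}" by blast
  then have "flip (\<Union>D) (flip C x) = flip (\<Union>D \<union> C) x" by (rule flip_Un)
  moreover have "\<Union>(insert C D) = \<Union>D \<union> C" by blast
  ultimately show ?thesis unfolding Fx_def by simp
qed

lemma pow_split_sum:
  assumes "wfam N Cs" "C \<in> Cs"
  shows "(\<Sum>D\<in>Pow Cs. g (Fx x D)) = (\<Sum>D\<in>Pow (Cs - {C}). g (Fx x D)) + (\<Sum>D\<in>Pow (Cs - {C}). g (Fx (flip C x) D))"
proof -
  have fin: "finite (Cs - {C})" using assms unfolding wfam_def by auto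
  have e: "Cs = insert C (Cs - {C})" using assms by auto
  have "(\<Sum>D\<in>Pow Cs. g (Fx x D)) = (\<Sum>D\<in>Pow (Cs - {C}). g (Fx x D)) + (\<Sum>D\<in>Pow (Cs - {C}). g (Fx x (insert C D)))"
  proof -
    have "(\<Sum>D\<in>Pow (insert C (Cs - {C})). g (Fx x D)) = (\<Sum>D\<in>Pow (Cs - {C}). g (Fx x D)) + (\<Sum>D\<in>Pow (Cs - {C}). g (Fx x (insert C D)))"
      by (rule pow_insert_sum[OF fin]) simp
    then show ?thesis unfolding e[symmetric] .
  qed
  also have "(\<Sum>D\<in>Pow (Cs - {C}). g (Fx x (insert C D))) = (\<Sum>D\<in>Pow (Cs - {C}). g (Fx (flip C x) D))"
    by (rule sum.cong) (use Fx_insert[OF assms] in auto)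
  finally show ?thesis .
qed

definition ca :: "nat \<Rightarrow> real" where "ca n = real ((2*n) choose n) / 4^n"

lemma choose_Suc_central_nat: "(2*Suc n choose Suc n) * (n+1) = 2*(2*n+1) * ((2*n) choose n)"
proof -
  have e: "2*Suc n = Suc (Suc (2*n))" by simp
  have a: "Suc n * (Suc (Suc (2*n)) choose Suc n) = Suc (Suc (2*n)) * (Suc (2*n) choose n)"
    by (rule Suc_times_binomial)
  have b: "Suc n * (Suc (2*n) choose Suc n) = Suc (2*n) * ((2*n) choose n)"
    by (rule Suc_times_binomial)
  have c: "(Suc (2*n) choose n) = (Suc (2*n) choose (Suc n))"
    using binomial_symmetric[of n "Suc (2*n)"] by simp
  have "Suc n * ((2*Suc n choose Suc n) * (n+1)) = (n+1) * (Suc n * (Suc (Suc (2*n)) choose Suc n))"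
    unfolding e by (simp only: mult_ac)
  also have "\<dots> = (n+1) * (Suc (Suc (2*n)) * (Suc (2*n) choose Suc n))"
    by (simp only: a c)
  also have "\<dots> = Suc (Suc (2*n)) * (Suc n * (Suc (2*n) choose Suc n))"
    by (simp only: mult_ac Suc_eq_plus1)
  also have "\<dots> = Suc (Suc (2*n)) * (Suc (2*n) * ((2*n) choose n))"
    by (simp only: b)
  also have "\<dots> = Suc n * (2*(2*n+1) * ((2*n) choose n))"
    by (simp del: binomial_Suc_Suc add: algebra_simps)
  finally show ?thesis by (rule mult_left_cancel[THEN iffD1, rotated]) simp
qed

lemma choose_Suc_central: "real ((2*Suc n) choose Suc n) * (n+1) = 2*(2*n+1) * real ((2*n) choose n)"
proof -
  have "real ((2*Suc n choose Suc n) * (n+1)) = real (2*(2*n+1) * ((2*n) choose n))"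
    by (simp only: choose_Suc_central_nat)
  thus ?thesis by (simp only: of_nat_mult of_nat_add of_nat_1 of_nat_numeral)
qed

lemma ca_Suc: "ca (Suc n) = ca n * (2*n+1) / (2*n+2)"
proof -
  have "ca (Suc n) * (n+1) = 2*(2*n+1) * real ((2*n) choose n) / 4^(Suc n)"
    unfolding ca_def using choose_Suc_central[of n] by (simp add: field_simps)
  also have "\<dots> = ca n * (2*n+1) / 2" unfolding ca_def by (simp add: field_simps)
  finally show ?thesis by (simp add: field_simps)
qed

lemma ca_pos: "ca n > 0" unfolding ca_def by simp

lemma ca_le1: "ca n \<le> 1"
proof -
  have "(2*n choose n) \<le> 2^(2*n)" by (rule binomial_le_pow2)
  hence "real (2*n choose n) \<le> 4^n" by (simp add: power_mult)
  thus ?thesis unfolding ca_def by simp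
qed

lemma wallis_eq: "(\<Prod>k=1..n. 4*(real k)^2 / (4*(real k)^2 - 1)) = 1 / ((2*n+1) * ca n ^ 2)"
proof (induction n)
  case 0 then show ?case by (simp add: ca_def)
next
  case (Suc n)
  have p: "ca n > 0" by (rule ca_pos)
  have "(\<Prod>k=1..Suc n. 4*(real k)^2 / (4*(real k)^2 - 1)) =
        (\<Prod>k=1..n. 4*(real k)^2 / (4*(real k)^2 - 1)) * (4*(real (Suc n))^2 / (4*(real (Suc n))^2 - 1))"
    by (simp add: prod.nat_ivl_Suc')
  also have "\<dots> = 1 / ((2*n+1) * ca n ^ 2) * (4*(real (Suc n))^2 / (4*(real (Suc n))^2 - 1))"
    using Suc by simp
  also have "\<dots> = 1 / ((2*Suc n+1) * ca (Suc n) ^ 2)"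
    using p unfolding ca_Suc by (simp add: field_simps power2_eq_square)
  finally show ?case by simp
qed

lemma ca_bound: assumes "n \<ge> 1" shows "ca n ^ 2 \<le> 1 / (pi * n)"
proof -
  define Q where "Q k = 1 / (2 * real k * ca k ^ 2)" for k
  define P where "P k = (\<Prod>j=1..k. 4*(real j)^2 / (4*(real j)^2 - 1))" for k
  have Qdec: "Q (Suc k) \<le> Q k" if "k \<ge> 1" for k
  proof -
    have p: "ca k > 0" by (rule ca_pos)
    have r: "ca (Suc k)^2 = ca k^2 * (2*k+1)^2 / (2*k+2)^2"
      unfolding ca_Suc by (simp add: power_divide power_mult_distrib)
    have i1: "2*real k*(2*k+2) \<le> (2*k+1)^2" by (simp add: power2_eq_square algebra_simps)
    have "2*real k*ca k^2 * (2*k+2) \<le> ca k^2 * (2*k+1)^2"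
      using mult_left_mono[OF i1, of "ca k^2"] by (simp add: algebra_simps)
    hence "2*real k*ca k^2 \<le> ca k^2 * (2*k+1)^2 / (2*k+2)" by (simp add: field_simps)
    also have "\<dots> = 2*real (Suc k)*ca (Suc k)^2"
    proof -
      have gen: "x*A/x^2 = A/x" if "x > 0" for x A :: real using that by (simp add: power2_eq_square)
      have "2*real (Suc k)*ca (Suc k)^2 = (2*real k+2) * (ca k^2*(2*k+1)^2 / (2*real k+2)^2)"
        unfolding r by (simp add: ac_simps)
      also have "\<dots> = ca k^2*(2*k+1)^2/(2*real k+2)" using gen[of "2*real k+2" "ca k^2*(2*k+1)^2"] by simp
      finally show ?thesis by simp
    qed
    finally have le: "2*real k*ca k^2 \<le> 2*real (Suc k)*ca (Suc k)^2" .
    have pos: "0 < 2*real k*ca k^2" using p that by simp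
    show ?thesis unfolding Q_def using le pos by (simp add: frac_le)
  qed
  have Qmono: "Q k \<le> Q n" if "k \<ge> n" for k
    using that
  proof (induction k rule: dec_induct)
    case base then show ?case by simp
  next
    case (step k) then show ?case using Qdec[of k] assms by linarith
  qed
  have PQ: "P k \<le> Q k" if "k \<ge> 1" for k
  proof -
    have p: "ca k > 0" by (rule ca_pos)
    have "P k = 1 / ((2*k+1) * ca k ^ 2)" unfolding P_def using wallis_eq[of k] by simp
    also have "\<dots> \<le> Q k" unfolding Q_def using p that by (intro divide_left_mono mult_right_mono mult_pos_pos) auto
    finally show ?thesis .
  qed
  have lim: "P \<longlonglongrightarrow> pi/2" unfolding P_def by (rule wallis)
  have "pi/2 \<le> Q n"
    apply (rule LIMSEQ_le_const2[OF lim])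
    using PQ Qmono assms by (meson order.trans le_trans)
  then have "pi/2 \<le> 1 / (2 * real n * ca n ^ 2)" unfolding Q_def .
  moreover have "ca n ^ 2 > 0" using ca_pos[of n] by simp
  ultimately show ?thesis using assms by (simp add: field_simps)
qed

fun zz :: "nat \<Rightarrow> real" where
  "zz 0 = 0"
| "zz (Suc n) = zz n + (if even n then ca (n div 2) else 0)"

lemma zz_even: "zz (2*m) = 2*m*ca m"
proof (induction m)
  case 0 then show ?case by simp
next
  case (Suc m)
  have "2*Suc m = Suc (Suc (2*m))" by simp
  hence "zz (2*Suc m) = zz (2*m) + ca m" by simp
  also have "\<dots> = (2*m+1) * ca m" using Suc by (simp add: field_simps)
  also have "\<dots> = 2 * Suc m * ca (Suc m)" unfolding ca_Suc by (simp add: field_simps)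
  finally show ?case by simp
qed

lemma zz_even_bound: "zz (2*m) \<le> sqrt (2 * real (2*m) / pi)"
proof (cases "m = 0")
  case True then show ?thesis by simp
next
  case False
  have b: "ca m ^ 2 \<le> 1 / (pi * m)" using False ca_bound by simp
  have "(2*m*ca m)^2 = 4*m*m * ca m ^2" by (simp add: power2_eq_square)
  also have "\<dots> \<le> 4*m*m * (1/(pi*m))" using b by (intro mult_left_mono) auto
  also have "\<dots> = 2 * real (2*m) / pi" using False by (simp add: field_simps)
  finally have "(2*m*ca m)^2 \<le> 2 * real (2*m) / pi" .
  moreover have "2*m*ca m \<ge> 0" using ca_pos[of m] by simp
  ultimately show ?thesis unfolding zz_even by (simp add: real_le_rsqrt)
qed

lemma zz_bound: "zz N \<le> sqrt (2 * real N / pi) + 1"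
proof (cases "even N")
  case True
  then obtain m where "N = 2*m" by blast
  then show ?thesis using zz_even_bound[of m] by simp
next
  case False
  then obtain m where N: "N = Suc (2*m)" by (metis oddE Suc_eq_plus1)
  have "zz N = zz (2*m) + ca m" using N by simp
  also have "\<dots> \<le> sqrt (2 * real (2*m) / pi) + 1" using zz_even_bound[of m] ca_le1[of m] by simp
  also have "\<dots> \<le> sqrt (2 * real N / pi) + 1" using N by (simp add: divide_right_mono)
  finally show ?thesis .
qed

lemma nth_Fx: "i < length x \<Longrightarrow> Fx x D ! i = (x!i \<noteq> (i \<in> \<Union>D))"
  unfolding Fx_def by simp

lemma length_Fx[simp]: "length (Fx x D) = length x"
  unfolding Fx_def by simp

lemma wfam_disj: "wfam N Cs \<Longrightarrow> A \<in> Cs \<Longrightarrow> B \<in> Cs \<Longrightarrow> A \<noteq> B \<Longrightarrow> A \<inter> B = {}"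
  unfolding wfam_def by blast

lemma wfam_range: "wfam N Cs \<Longrightarrow> A \<in> Cs \<Longrightarrow> A \<subseteq> {..<N}"
  unfolding wfam_def by blast

lemma wfam_finite: "wfam N Cs \<Longrightarrow> finite Cs"
  unfolding wfam_def by blast

lemma mem_Union_iff:
  assumes "wfam N Cs" "C \<in> Cs" "i \<in> C" "D \<subseteq> Cs"
  shows "i \<in> \<Union>D \<longleftrightarrow> C \<in> D"
proof
  assume "i \<in> \<Union>D"
  then obtain B where B: "B \<in> D" "i \<in> B" by blast
  then have "B \<in> Cs" using assms(4) by blast
  show "C \<in> D"
  proof (rule ccontr)
    assume "C \<notin> D"
    then have "B \<noteq> C" using B by blast
    then have "B \<inter> C = {}" using wfam_disj[OF assms(1) \<open>B \<in> Cs\<close> assms(2)] by simp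
    then show False using B assms(3) by blast
  qed
next
  assume "C \<in> D" then show "i \<in> \<Union>D" using assms(3) by blast
qed

lemma not_mem_Union:
  assumes "i \<notin> \<Union>Cs" "D \<subseteq> Cs" shows "i \<notin> \<Union>D"
  using assms by blast

definition bnum :: "nat set set \<Rightarrow> bool list \<Rightarrow> nat" where
  "bnum Cs x = card {C\<in>Cs. eC C x \<noteq> 0}"

lemma sum_S_pow:
  assumes "finite Cs" "wfam N Cs" "length x = N"
  shows "(\<Sum>D\<in>Pow Cs. Ssum (Fx x D)) = 2^card Cs * (Ssum x - (\<Sum>C\<in>Cs. eC C x))"
  using assms
proof (induction Cs arbitrary: x rule: finite_induct)
  case empty
  then show ?case by (simp add: Fx_def)
next
  case (insert C Cs)
  have wf: "wfam N Cs" using wfam_subset[OF insert.prems(1)] by blast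
  have CN: "C \<subseteq> {..<length x}" using wfam_range[OF insert.prems(1)] insert.prems(2) by simp
  have ins: "Fx x (insert C D) = Fx (flip C x) D" if "D \<in> Pow Cs" for D
    using Fx_insert[OF insert.prems(1), of C D x] that insert.hyps(2) by auto
  have eq: "(\<Sum>C'\<in>Cs. eC C' (flip C x)) = (\<Sum>C'\<in>Cs. eC C' x)"
  proof (rule sum.cong)
    fix C' assume "C' \<in> Cs"
    then have "C' \<inter> C = {}" "C' \<subseteq> {..<length x}"
      using wfam_disj[OF insert.prems(1), of C' C] wfam_range[OF insert.prems(1), of C'] insert.hyps(2) insert.prems(2)
      by auto
    then show "eC C' (flip C x) = eC C' x" by (rule eC_flip_disj)
  qed simp
  have "(\<Sum>D\<in>Pow (insert C Cs). Ssum (Fx x D)) = (\<Sum>D\<in>Pow Cs. Ssum (Fx x D)) + (\<Sum>D\<in>Pow Cs. Ssum (Fx x (insert C D)))"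
    by (rule pow_insert_sum[OF insert.hyps])
  also have "(\<Sum>D\<in>Pow Cs. Ssum (Fx x (insert C D))) = (\<Sum>D\<in>Pow Cs. Ssum (Fx (flip C x) D))"
    by (rule sum.cong) (simp_all add: ins)
  also have "(\<Sum>D\<in>Pow Cs. Ssum (Fx x D)) = 2^card Cs * (Ssum x - (\<Sum>C\<in>Cs. eC C x))"
    using insert.IH[OF wf insert.prems(2)] .
  also have "(\<Sum>D\<in>Pow Cs. Ssum (Fx (flip C x) D)) = 2^card Cs * (Ssum (flip C x) - (\<Sum>C'\<in>Cs. eC C' (flip C x)))"
    using insert.IH[OF wf] insert.prems(2) by simp
  also have "Ssum (flip C x) = Ssum x - 2 * eC C x" by (rule S_flip[OF CN])
  finally show ?case using insert.hyps eq by (simp add: algebra_simps)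
qed

lemma Q_lemma:
  assumes "finite Cs" "wfam N Cs" "length x = N" "\<sigma> = 1 \<or> \<sigma> = -1"
    "\<forall>D\<in>Pow Cs. \<sigma> * Ssum (Fx x D) \<ge> 0"
  shows "\<sigma> * (Ssum x - (\<Sum>C\<in>Cs. eC C x)) \<ge> (\<Sum>C\<in>Cs. \<bar>eC C x\<bar>)"
  using assms
proof (induction Cs arbitrary: x rule: finite_induct)
  case empty
  then show ?case by (simp add: Fx_def)
next
  case (insert C Cs)
  have wf: "wfam N Cs" using wfam_subset[OF insert.prems(1)] by blast
  have CN: "C \<subseteq> {..<length x}" using wfam_range[OF insert.prems(1)] insert.prems(2) by simp
  have ins: "Fx x (insert C D) = Fx (flip C x) D" if "D \<in> Pow Cs" for D
    using Fx_insert[OF insert.prems(1), of C D x] that insert.hyps(2) by auto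
  have eq: "(\<Sum>C'\<in>Cs. eC C' (flip C x)) = (\<Sum>C'\<in>Cs. eC C' x)"
    "(\<Sum>C'\<in>Cs. \<bar>eC C' (flip C x)\<bar>) = (\<Sum>C'\<in>Cs. \<bar>eC C' x\<bar>)"
  proof -
    have e: "eC C' (flip C x) = eC C' x" if "C' \<in> Cs" for C'
    proof -
      have "C' \<inter> C = {}" "C' \<subseteq> {..<length x}"
        using wfam_disj[OF insert.prems(1), of C' C] wfam_range[OF insert.prems(1), of C'] insert.hyps(2) insert.prems(2) that
        by auto
      then show ?thesis by (rule eC_flip_disj)
    qed
    show "(\<Sum>C'\<in>Cs. eC C' (flip C x)) = (\<Sum>C'\<in>Cs. eC C' x)" by (rule sum.cong) (simp_all add: e)
    show "(\<Sum>C'\<in>Cs. \<bar>eC C' (flip C x)\<bar>) = (\<Sum>C'\<in>Cs. \<bar>eC C' x\<bar>)" by (rule sum.cong) (simp_all add: e)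
  qed
  have h1: "\<forall>D\<in>Pow Cs. \<sigma> * Ssum (Fx x D) \<ge> 0" using insert.prems(4) by auto
  have h2: "\<forall>D\<in>Pow Cs. \<sigma> * Ssum (Fx (flip C x) D) \<ge> 0"
  proof
    fix D assume D: "D \<in> Pow Cs"
    then have "insert C D \<in> Pow (insert C Cs)" by auto
    then have "\<sigma> * Ssum (Fx x (insert C D)) \<ge> 0" using insert.prems(4) by blast
    then show "\<sigma> * Ssum (Fx (flip C x) D) \<ge> 0" using ins[OF D] by simp
  qed
  have I1: "\<sigma> * (Ssum x - (\<Sum>C\<in>Cs. eC C x)) \<ge> (\<Sum>C\<in>Cs. \<bar>eC C x\<bar>)"
    using insert.IH[OF wf insert.prems(2) insert.prems(3) h1] .
  have I2: "\<sigma> * (Ssum (flip C x) - (\<Sum>C'\<in>Cs. eC C' (flip C x))) \<ge> (\<Sum>C'\<in>Cs. \<bar>eC C' (flip C x)\<bar>)"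
    using insert.IH[OF wf _ insert.prems(3) h2] insert.prems(2) by simp
  then have I2': "\<sigma> * (Ssum x - 2 * eC C x - (\<Sum>C'\<in>Cs. eC C' x)) \<ge> (\<Sum>C'\<in>Cs. \<bar>eC C' x\<bar>)"
    unfolding eq S_flip[OF CN] .
  have "\<sigma> * (Ssum x - eC C x - (\<Sum>C\<in>Cs. eC C x)) \<ge> \<bar>eC C x\<bar> + (\<Sum>C\<in>Cs. \<bar>eC C x\<bar>)"
    using I1 I2' insert.prems(3) by (auto simp: algebra_simps abs_if)
  then show ?case using insert.hyps by (simp add: algebra_simps)
qed

lemma bnum_le: "finite Cs \<Longrightarrow> int (bnum Cs x) \<le> (\<Sum>C\<in>Cs. \<bar>eC C x\<bar>)"
proof -
  assume f: "finite Cs"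
  have "int (bnum Cs x) = (\<Sum>C\<in>{C\<in>Cs. eC C x \<noteq> 0}. 1)" unfolding bnum_def by simp
  also have "\<dots> \<le> (\<Sum>C\<in>{C\<in>Cs. eC C x \<noteq> 0}. \<bar>eC C x\<bar>)" by (rule sum_mono) auto
  also have "\<dots> \<le> (\<Sum>C\<in>Cs. \<bar>eC C x\<bar>)" by (rule sum_mono2) (use f in auto)
  finally show ?thesis .
qed

lemma leaf_bound:
  assumes "wfam N Cs" "length x = N" "\<forall>D\<in>Pow Cs. majority (Fx x D) = v"
  shows "2^card Cs * int (bnum Cs x) \<le> (\<Sum>D\<in>Pow Cs. \<bar>Ssum (Fx x D)\<bar>)"
proof -
  have f: "finite Cs" using wfam_finite[OF assms(1)] .
  define \<sigma> :: int where "\<sigma> = (if v then 1 else -1)"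
  have s: "\<sigma> = 1 \<or> \<sigma> = -1" unfolding \<sigma>_def by simp
  have pos: "\<forall>D\<in>Pow Cs. \<sigma> * Ssum (Fx x D) \<ge> 0"
  proof
    fix D assume "D \<in> Pow Cs"
    then have m: "(Ssum (Fx x D) \<ge> 0) = v" using assms(3) unfolding majority_S by blast
    show "\<sigma> * Ssum (Fx x D) \<ge> 0"
    proof (cases v)
      case True then show ?thesis using m unfolding \<sigma>_def by simp
    next
      case False then show ?thesis using m unfolding \<sigma>_def by simp
    qed
  qed
  have Q: "\<sigma> * (Ssum x - (\<Sum>C\<in>Cs. eC C x)) \<ge> (\<Sum>C\<in>Cs. \<bar>eC C x\<bar>)"
    by (rule Q_lemma[OF f assms(1) assms(2) s pos])
  have "2^card Cs * int (bnum Cs x) \<le> 2^card Cs * (\<Sum>C\<in>Cs. \<bar>eC C x\<bar>)"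
    using bnum_le[OF f, of x] by simp
  also have "\<dots> \<le> 2^card Cs * (\<sigma> * (Ssum x - (\<Sum>C\<in>Cs. eC C x)))"
    using Q by simp
  also have "\<dots> = \<sigma> * (\<Sum>D\<in>Pow Cs. Ssum (Fx x D))"
    using sum_S_pow[OF f assms(1) assms(2)] by simp
  also have "\<dots> = (\<Sum>D\<in>Pow Cs. \<sigma> * Ssum (Fx x D))" by (simp add: sum_distrib_left)
  also have "\<dots> \<le> (\<Sum>D\<in>Pow Cs. \<bar>Ssum (Fx x D)\<bar>)"
    by (rule sum_mono) (use s in auto)
  finally show ?thesis .
qed

definition costS :: "xtree \<Rightarrow> bool list \<Rightarrow> nat set set \<Rightarrow> real" where
  "costS T x Cs = (\<Sum>D\<in>Pow Cs. real (cost T (Fx x D)))"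
definition absS :: "bool list \<Rightarrow> nat set set \<Rightarrow> real" where
  "absS x Cs = (\<Sum>D\<in>Pow Cs. \<bar>real_of_int (Ssum (Fx x D))\<bar>)"
definition bound :: "xtree \<Rightarrow> bool list \<Rightarrow> nat set set \<Rightarrow> bool" where
  "bound T x Cs \<longleftrightarrow> 2 * 2^card Cs * real (bnum Cs x) - 2 * absS x Cs \<le> 3 * costS T x Cs"
definition correct :: "xtree \<Rightarrow> bool list \<Rightarrow> nat set set \<Rightarrow> bool" where
  "correct T x Cs \<longleftrightarrow> (\<forall>D\<in>Pow Cs. run T (Fx x D) = majority (Fx x D))"
definition good :: "nat \<Rightarrow> xtree \<Rightarrow> bool" where
  "good N T \<longleftrightarrow> (\<forall>x Cs. length x = N \<longrightarrow> wfam N Cs \<longrightarrow> correct T x Cs \<longrightarrow> bound T x Cs)"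

lemma transfer:
  assumes "\<And>g::bool list \<Rightarrow> nat. (\<Sum>D\<in>A. g (f D)) = (\<Sum>D\<in>B. g (fa D)) + (\<Sum>D\<in>B'. g (fb D))"
    "finite B" "finite B'" "\<forall>D\<in>A. P (f D)"
  shows "\<forall>D\<in>B. P (fa D)" "\<forall>D\<in>B'. P (fb D)"
proof -
  let ?g = "\<lambda>X. if P X then 0 else (1::nat)"
  have "(\<Sum>D\<in>A. ?g (f D)) = 0" using assms(4) by simp
  then have "(\<Sum>D\<in>B. ?g (fa D)) = 0" "(\<Sum>D\<in>B'. ?g (fb D)) = 0" using assms(1)[of ?g] by simp_all
  then show "\<forall>D\<in>B. P (fa D)" "\<forall>D\<in>B'. P (fb D)" using assms(2,3) by (auto simp: sum_eq_0_iff split: if_splits)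
qed

lemma node_costS:
  assumes "finite B" "\<forall>D\<in>Pow B. answer q (Fx y D) = v"
  shows "costS (Node q t0 t1) y B = 2^card B + costS (if v then t1 else t0) y B"
proof -
  have "costS (Node q t0 t1) y B = (\<Sum>D\<in>Pow B. 1 + real (cost (if v then t1 else t0) (Fx y D)))"
    unfolding costS_def by (rule sum.cong) (use assms(2) in auto)
  also have "\<dots> = real (card (Pow B)) + costS (if v then t1 else t0) y B"
    unfolding costS_def by (simp add: sum.distrib)
  also have "real (card (Pow B)) = 2^card B" using assms(1) by (simp add: card_Pow)
  finally show ?thesis .
qed

lemma node_correct:
  assumes "\<forall>D\<in>Pow B. answer q (Fx y D) = v" "\<forall>D\<in>Pow B. run (Node q t0 t1) (Fx y D) = majority (Fx y D)"
  shows "correct (if v then t1 else t0) y B"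
  unfolding correct_def using assms by auto

lemma const_case:
  assumes g: "good N (if v then t1 else t0)" and len: "length x = N" and wf: "wfam N Cs"
    and cor: "correct (Node q t0 t1) x Cs" and ans: "\<forall>D\<in>Pow Cs. answer q (Fx x D) = v"
  shows "bound (Node q t0 t1) x Cs"
proof -
  have f: "finite Cs" using wfam_finite[OF wf] .
  have c: "correct (if v then t1 else t0) x Cs"
    by (rule node_correct[OF ans]) (use cor in \<open>simp add: correct_def\<close>)
  have b: "bound (if v then t1 else t0) x Cs" using g len wf c unfolding good_def by blast
  have e: "costS (Node q t0 t1) x Cs = 2^card Cs + costS (if v then t1 else t0) x Cs"
    by (rule node_costS[OF f ans])
  have p: "(2::real)^card Cs \<ge> 0" by simp
  define cc where "cc = costS (if v then t1 else t0) x Cs"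
  have "3 * (2^card Cs + cc) = 3*2^card Cs + 3*(cc::real)" by (simp add: distrib_left)
  then show ?thesis using b p unfolding bound_def e cc_def[symmetric] by linarith
qed

lemma bnum_insert: "finite R \<Longrightarrow> C \<notin> R \<Longrightarrow> bnum (insert C R) x = bnum R x + (if eC C x \<noteq> 0 then 1 else 0)"
proof -
  assume f: "finite R" and C: "C \<notin> R"
  show ?thesis
  proof (cases "eC C x \<noteq> 0")
    case True
    then have "{C'\<in>insert C R. eC C' x \<noteq> 0} = insert C {C'\<in>R. eC C' x \<noteq> 0}" by auto
    then show ?thesis unfolding bnum_def using f C True by simp
  next
    case False
    then have "{C'\<in>insert C R. eC C' x \<noteq> 0} = {C'\<in>R. eC C' x \<noteq> 0}" by auto
    then show ?thesis unfolding bnum_def using False by simp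
  qed
qed

lemma bnum_flip:
  assumes "\<forall>B\<in>R. B \<inter> C = {} \<and> B \<subseteq> {..<length x}"
  shows "bnum R (flip C x) = bnum R x"
proof -
  have "{C'\<in>R. eC C' (flip C x) \<noteq> 0} = {C'\<in>R. eC C' x \<noteq> 0}"
    using assms eC_flip_disj by auto
  then show ?thesis unfolding bnum_def by simp
qed

lemma split_case:
  assumes g0: "good N t0" and g1: "good N t1" and len: "length x = N" and wf: "wfam N Cs"
    and C: "C \<in> Cs" and cor: "correct (Node q t0 t1) x Cs"
    and ans: "\<forall>D\<in>Pow (Cs - {C}). answer q (Fx x D) = v \<and> answer q (Fx (flip C x) D) = (\<not> v)"
  shows "bound (Node q t0 t1) x Cs"
proof -
  define R where "R = Cs - {C}"
  define x' where "x' = flip C x"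
  have f: "finite Cs" using wfam_finite[OF wf] .
  have fR: "finite R" unfolding R_def using f by simp
  have wfR: "wfam N R" unfolding R_def by (rule wfam_subset[OF wf]) auto
  have len': "length x' = N" unfolding x'_def using len by simp
  have spl: "\<And>g. (\<Sum>D\<in>Pow Cs. g (Fx x D)) = (\<Sum>D\<in>Pow R. g (Fx x D)) + (\<Sum>D\<in>Pow R. g (Fx x' D))"
    unfolding R_def x'_def by (rule pow_split_sum[OF wf C])
  have cn: "\<forall>D\<in>Pow R. run (Node q t0 t1) (Fx x D) = majority (Fx x D)"
       "\<forall>D\<in>Pow R. run (Node q t0 t1) (Fx x' D) = majority (Fx x' D)"
    using transfer[where A="Pow Cs" and f="Fx x" and B="Pow R" and fa="Fx x" and B'="Pow R" and fb="Fx x'"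
      and P="\<lambda>X. run (Node q t0 t1) X = majority X", OF spl] fR cor
    unfolding correct_def by auto
  have a1: "\<forall>D\<in>Pow R. answer q (Fx x D) = v" and a2: "\<forall>D\<in>Pow R. answer q (Fx x' D) = (\<not> v)"
    using ans unfolding R_def x'_def by auto
  have c1: "correct (if v then t1 else t0) x R" by (rule node_correct[OF a1 cn(1)])
  have c2: "correct (if \<not> v then t1 else t0) x' R" by (rule node_correct[OF a2 cn(2)])
  have b1: "bound (if v then t1 else t0) x R" using g0 g1 len wfR c1 unfolding good_def by auto
  have b2: "bound (if \<not> v then t1 else t0) x' R" using g0 g1 len' wfR c2 unfolding good_def by auto
  have cs: "costS (Node q t0 t1) x Cs = costS (Node q t0 t1) x R + costS (Node q t0 t1) x' R"
    unfolding costS_def by (rule spl)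
  have as: "absS x Cs = absS x R + absS x' R"
    unfolding absS_def by (rule spl)
  have e1: "costS (Node q t0 t1) x R = 2^card R + costS (if v then t1 else t0) x R" by (rule node_costS[OF fR a1])
  have e2: "costS (Node q t0 t1) x' R = 2^card R + costS (if \<not> v then t1 else t0) x' R" by (rule node_costS[OF fR a2])
  have bn1: "bnum R x' = bnum R x"
    unfolding x'_def
  proof (rule bnum_flip, intro ballI conjI)
    fix B assume "B \<in> R"
    then show "B \<inter> C = {}" using wfam_disj[OF wf, of B C] C unfolding R_def by auto
    show "B \<subseteq> {..<length x}" using wfam_range[OF wfR \<open>B \<in> R\<close>] len by simp
  qed
  have bn2: "bnum Cs x \<le> bnum R x + 1"
  proof -
    have "Cs = insert C R" unfolding R_def using C by auto
    moreover have "C \<notin> R" unfolding R_def by simp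
    ultimately show ?thesis using bnum_insert[OF fR, of C x] by simp
  qed
  have cp: "card Cs > 0" using f C card_gt_0_iff by blast
  have cardCs: "card Cs = Suc (card R)" unfolding R_def using f C cp by simp
  define P :: real where "P = 2^card R"
  have P0: "P > 0" unfolding P_def by simp
  have m: "P * real (bnum Cs x) \<le> P * (real (bnum R x) + 1)"
    using bn2 P0 by (intro mult_left_mono) auto
  define ta where "ta = (if v then t1 else t0)"
  define tb where "tb = (if \<not> v then t1 else t0)"
  define bb where "bb = real (bnum Cs x)"
  define b' where "b' = real (bnum R x)"
  have h1: "2 * (P * b') - 2 * absS x R \<le> 3 * costS ta x R"
    using b1 unfolding bound_def ta_def P_def b'_def by (simp add: algebra_simps)
  have h2: "2 * (P * b') - 2 * absS x' R \<le> 3 * costS tb x' R"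
    using b2 unfolding bound_def tb_def P_def b'_def bn1 by (simp add: algebra_simps)
  have h3: "2 * 2^card Cs * real (bnum Cs x) = 4 * (P * bb)" unfolding cardCs P_def bb_def by simp
  have h4: "P * bb \<le> P + P * b'" using m unfolding bb_def b'_def by (simp add: algebra_simps)
  have h5: "3 * costS (Node q t0 t1) x Cs = 6 * P + 3 * costS ta x R + 3 * costS tb x' R"
    unfolding cs e1 e2 P_def ta_def tb_def by (simp add: algebra_simps)
  have ar: "4*(u::real) - 2*(a1+a2) \<le> 6*p + 3*c1 + 3*c2"
    if "2*w - 2*a1 \<le> 3*c1" "2*w - 2*a2 \<le> 3*c2" "u \<le> p + w" "0 < p" for u w a1 a2 c1 c2 p :: real
    using that by (smt (verit))
  show ?thesis unfolding bound_def h3 h5 as by (rule ar[OF h1 h2 h4 P0])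
qed

lemma merge_facts:
  assumes wf: "wfam N Cs" and C1: "C1 \<in> Cs" and C2: "C2 \<in> Cs" and ne: "C1 \<noteq> C2"
  defines "R \<equiv> Cs - {C1, C2}"
  shows "C1 \<union> C2 \<notin> R" "wfam N (insert (C1 \<union> C2) R)" "finite R" "C2 \<notin> R" "C1 \<notin> insert C2 R"
    "Cs = insert C1 (insert C2 R)" "\<forall>B\<in>R. B \<inter> C1 = {} \<and> B \<inter> C2 = {}"
proof -
  have d12: "C1 \<inter> C2 = {}" using wfam_disj[OF wf C1 C2 ne] .
  have dR: "\<forall>B\<in>R. B \<inter> C1 = {} \<and> B \<inter> C2 = {}"
  proof
    fix B assume B: "B \<in> R"
    then have "B \<in> Cs" "B \<noteq> C1" "B \<noteq> C2" unfolding R_def by auto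
    then show "B \<inter> C1 = {} \<and> B \<inter> C2 = {}" using wfam_disj[OF wf _ C1] wfam_disj[OF wf _ C2] by blast
  qed
  then show "\<forall>B\<in>R. B \<inter> C1 = {} \<and> B \<inter> C2 = {}" .
  show "C1 \<union> C2 \<notin> R"
  proof
    assume a: "C1 \<union> C2 \<in> R"
    then have "(C1 \<union> C2) \<inter> C1 = {}" "(C1 \<union> C2) \<inter> C2 = {}" using dR by auto
    then have "C1 = {}" "C2 = {}" by auto
    then show False using ne by simp
  qed
  show fR: "finite R" unfolding R_def using wfam_finite[OF wf] by simp
  show "C2 \<notin> R" "C1 \<notin> insert C2 R" unfolding R_def using ne by auto
  show "Cs = insert C1 (insert C2 R)" unfolding R_def using C1 C2 by auto
  have wfR: "wfam N R" unfolding R_def by (rule wfam_subset[OF wf]) auto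
  show "wfam N (insert (C1 \<union> C2) R)"
    unfolding wfam_def
  proof (intro conjI ballI impI)
    show "finite (insert (C1 \<union> C2) R)" using fR by simp
  next
    fix C assume "C \<in> insert (C1 \<union> C2) R"
    then show "C \<subseteq> {..<N}" using wfam_range[OF wf C1] wfam_range[OF wf C2] wfam_range[OF wfR] by auto
  next
    fix A B assume A: "A \<in> insert (C1 \<union> C2) R" and B: "B \<in> insert (C1 \<union> C2) R" and AB: "A \<noteq> B"
    show "A \<inter> B = {}"
    proof (cases "A = C1 \<union> C2")
      case True
      then have "B \<in> R" using B AB by auto
      then show ?thesis using dR True by blast
    next
      case False
      then have A': "A \<in> R" using A by auto
      show ?thesis
      proof (cases "B = C1 \<union> C2")
        case True then show ?thesis using dR A' by blast
      next
        case False
        then have "B \<in> R" using B by auto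
        then show ?thesis using wfam_disj[OF wfR A' _ AB] by simp
      qed
    qed
  qed
qed

lemma pow_merge_sum:
  fixes g :: "bool list \<Rightarrow> 'a::comm_monoid_add"
  assumes wf: "wfam N Cs" and C1: "C1 \<in> Cs" and C2: "C2 \<in> Cs" and ne: "C1 \<noteq> C2"
  defines "Nw \<equiv> insert (C1 \<union> C2) (Cs - {C1, C2})"
  shows "(\<Sum>D\<in>Pow Cs. g (Fx x D)) = (\<Sum>D\<in>Pow Nw. g (Fx x D)) + (\<Sum>D\<in>Pow Nw. g (Fx (flip C1 x) D))"
proof -
  define R where "R = Cs - {C1, C2}"
  note mf = merge_facts[OF wf C1 C2 ne, folded R_def]
  have NwR: "Nw = insert (C1 \<union> C2) R" unfolding Nw_def R_def by simp
  have fR: "finite R" by (rule mf(3))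
  have DR: "\<Union>D \<inter> C1 = {}" "\<Union>D \<inter> C2 = {}" if "D \<in> Pow R" for D
    using mf(7) that by blast+
  have i1: "Fx x (insert (C1 \<union> C2) D) = Fx x (insert C1 (insert C2 D))" for D
  proof -
    have "\<Union>(insert (C1 \<union> C2) D) = \<Union>(insert C1 (insert C2 D))" by auto
    then show ?thesis unfolding Fx_def by simp
  qed
  have i2: "Fx (flip C1 x) D = Fx x (insert C1 D)" if "D \<in> Pow R" for D
  proof -
    have "flip (\<Union>D) (flip C1 x) = flip (\<Union>D \<union> C1) x" by (rule flip_Un) (use DR[OF that] in blast)
    moreover have "\<Union>(insert C1 D) = \<Union>D \<union> C1" by blast
    ultimately show ?thesis unfolding Fx_def by simp
  qed
  have i3: "Fx (flip C1 x) (insert (C1 \<union> C2) D) = Fx x (insert C2 D)" if "D \<in> Pow R" for D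
  proof -
    have d12: "C1 \<inter> C2 = {}" using wfam_disj[OF wf C1 C2 ne] .
    have "(\<Union>(insert (C1 \<union> C2) D) - C1) \<union> (C1 - \<Union>(insert (C1 \<union> C2) D)) = \<Union>(insert C2 D)"
      using DR[OF that] d12 by blast
    then show ?thesis unfolding Fx_def flip_flip by simp
  qed
  have s1: "(\<Sum>D\<in>Pow Cs. g (Fx x D)) =
      ((\<Sum>D\<in>Pow R. g (Fx x D)) + (\<Sum>D\<in>Pow R. g (Fx x (insert C2 D)))) +
      ((\<Sum>D\<in>Pow R. g (Fx x (insert C1 D))) + (\<Sum>D\<in>Pow R. g (Fx x (insert C1 (insert C2 D)))))"
  proof -
    have "(\<Sum>D\<in>Pow Cs. g (Fx x D)) = (\<Sum>D\<in>Pow (insert C2 R). g (Fx x D)) + (\<Sum>D\<in>Pow (insert C2 R). g (Fx x (insert C1 D)))"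
      unfolding mf(6)[symmetric]
      using pow_insert_sum[of "insert C2 R" C1 "\<lambda>D. g (Fx x D)"] fR mf(5) mf(6) by simp
    also have "(\<Sum>D\<in>Pow (insert C2 R). g (Fx x D)) = (\<Sum>D\<in>Pow R. g (Fx x D)) + (\<Sum>D\<in>Pow R. g (Fx x (insert C2 D)))"
      by (rule pow_insert_sum[OF fR mf(4)])
    also have "(\<Sum>D\<in>Pow (insert C2 R). g (Fx x (insert C1 D))) = (\<Sum>D\<in>Pow R. g (Fx x (insert C1 D))) + (\<Sum>D\<in>Pow R. g (Fx x (insert C1 (insert C2 D))))"
      by (rule pow_insert_sum[OF fR mf(4)])
    finally show ?thesis .
  qed
  have s2: "(\<Sum>D\<in>Pow Nw. g (Fx x D)) = (\<Sum>D\<in>Pow R. g (Fx x D)) + (\<Sum>D\<in>Pow R. g (Fx x (insert C1 (insert C2 D))))"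
    unfolding NwR pow_insert_sum[OF fR mf(1)] i1 ..
  have s3: "(\<Sum>D\<in>Pow Nw. g (Fx (flip C1 x) D)) = (\<Sum>D\<in>Pow R. g (Fx x (insert C1 D))) + (\<Sum>D\<in>Pow R. g (Fx x (insert C2 D)))"
  proof -
    have "(\<Sum>D\<in>Pow Nw. g (Fx (flip C1 x) D)) = (\<Sum>D\<in>Pow R. g (Fx (flip C1 x) D)) + (\<Sum>D\<in>Pow R. g (Fx (flip C1 x) (insert (C1 \<union> C2) D)))"
      unfolding NwR by (rule pow_insert_sum[OF fR mf(1)])
    also have "(\<Sum>D\<in>Pow R. g (Fx (flip C1 x) D)) = (\<Sum>D\<in>Pow R. g (Fx x (insert C1 D)))"
      by (rule sum.cong) (simp_all add: i2)
    also have "(\<Sum>D\<in>Pow R. g (Fx (flip C1 x) (insert (C1 \<union> C2) D))) = (\<Sum>D\<in>Pow R. g (Fx x (insert C2 D)))"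
      by (rule sum.cong) (simp_all add: i3)
    finally show ?thesis .
  qed
  show ?thesis unfolding s1 s2 s3 by (simp add: ac_simps)
qed

lemma merge_case:
  assumes g0: "good N t0" and g1: "good N t1" and len: "length x = N" and wf: "wfam N Cs"
    and C1: "C1 \<in> Cs" and C2: "C2 \<in> Cs" and ne: "C1 \<noteq> C2" and cor: "correct (Node q t0 t1) x Cs"
    and ans: "\<forall>D\<in>Pow (insert (C1 \<union> C2) (Cs - {C1, C2})). answer q (Fx x D) = v \<and> answer q (Fx (flip C1 x) D) = (\<not> v)"
  shows "bound (Node q t0 t1) x Cs"
proof -
  define R where "R = Cs - {C1, C2}"
  define Nw where "Nw = insert (C1 \<union> C2) R"
  define x' where "x' = flip C1 x"
  note mf = merge_facts[OF wf C1 C2 ne, folded R_def]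
  have fR: "finite R" by (rule mf(3))
  have fNw: "finite Nw" unfolding Nw_def using fR by simp
  have wfNw: "wfam N Nw" unfolding Nw_def by (rule mf(2))
  have len': "length x' = N" unfolding x'_def using len by simp
  have spl: "\<And>g::bool list \<Rightarrow> 'b::comm_monoid_add. (\<Sum>D\<in>Pow Cs. g (Fx x D)) = (\<Sum>D\<in>Pow Nw. g (Fx x D)) + (\<Sum>D\<in>Pow Nw. g (Fx x' D))"
    unfolding Nw_def R_def x'_def by (rule pow_merge_sum[OF wf C1 C2 ne])
  have cn: "\<forall>D\<in>Pow Nw. run (Node q t0 t1) (Fx x D) = majority (Fx x D)"
       "\<forall>D\<in>Pow Nw. run (Node q t0 t1) (Fx x' D) = majority (Fx x' D)"
    using transfer[where A="Pow Cs" and f="Fx x" and B="Pow Nw" and fa="Fx x" and B'="Pow Nw" and fb="Fx x'"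
      and P="\<lambda>X. run (Node q t0 t1) X = majority X", OF spl] fNw cor
    unfolding correct_def by auto
  have a1: "\<forall>D\<in>Pow Nw. answer q (Fx x D) = v" and a2: "\<forall>D\<in>Pow Nw. answer q (Fx x' D) = (\<not> v)"
    using ans unfolding Nw_def R_def x'_def by auto
  have c1: "correct (if v then t1 else t0) x Nw" by (rule node_correct[OF a1 cn(1)])
  have c2: "correct (if \<not> v then t1 else t0) x' Nw" by (rule node_correct[OF a2 cn(2)])
  have b1: "bound (if v then t1 else t0) x Nw" using g0 g1 len wfNw c1 unfolding good_def by auto
  have b2: "bound (if \<not> v then t1 else t0) x' Nw" using g0 g1 len' wfNw c2 unfolding good_def by auto
  have cs: "costS (Node q t0 t1) x Cs = costS (Node q t0 t1) x Nw + costS (Node q t0 t1) x' Nw"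
    unfolding costS_def by (rule spl)
  have as: "absS x Cs = absS x Nw + absS x' Nw"
    unfolding absS_def by (rule spl)
  have e1: "costS (Node q t0 t1) x Nw = 2^card Nw + costS (if v then t1 else t0) x Nw" by (rule node_costS[OF fNw a1])
  have e2: "costS (Node q t0 t1) x' Nw = 2^card Nw + costS (if \<not> v then t1 else t0) x' Nw" by (rule node_costS[OF fNw a2])
  have C1N: "C1 \<subseteq> {..<length x}" "C2 \<subseteq> {..<length x}" using wfam_range[OF wf C1] wfam_range[OF wf C2] len by auto
  have d12: "C1 \<inter> C2 = {}" using wfam_disj[OF wf C1 C2 ne] .
  have fC: "finite C1" "finite C2" using C1N finite_subset by auto
  define e1 where "e1 = eC C1 x"
  define e2 where "e2 = eC C2 x"
  have bR: "bnum R x' = bnum R x"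
    unfolding x'_def
  proof (rule bnum_flip, intro ballI conjI)
    fix B assume "B \<in> R"
    then show "B \<inter> C1 = {}" using mf(7) by auto
    show "B \<subseteq> {..<length x}" using wfam_range[OF wf, of B] \<open>B \<in> R\<close> len unfolding R_def by auto
  qed
  have bCs: "bnum Cs x = bnum R x + (if e1 \<noteq> 0 then 1 else 0) + (if e2 \<noteq> 0 then 1 else 0)"
  proof -
    have "bnum Cs x = bnum (insert C2 R) x + (if e1 \<noteq> 0 then 1 else 0)"
      unfolding e1_def by (subst mf(6), rule bnum_insert) (use fR mf(5) in auto)
    also have "bnum (insert C2 R) x = bnum R x + (if e2 \<noteq> 0 then 1 else 0)"
      unfolding e2_def by (rule bnum_insert[OF fR mf(4)])
    finally show ?thesis by simp
  qed
  have bN1: "bnum Nw x = bnum R x + (if e1 + e2 \<noteq> 0 then 1 else 0)"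
  proof -
    have "eC (C1 \<union> C2) x = e1 + e2" unfolding e1_def e2_def by (rule eC_Un[OF d12 fC])
    then show ?thesis unfolding Nw_def using bnum_insert[OF fR mf(1), of x] by simp
  qed
  have bN2: "bnum Nw x' = bnum R x + (if e2 - e1 \<noteq> 0 then 1 else 0)"
  proof -
    have "eC (C1 \<union> C2) x' = eC C1 x' + eC C2 x'" by (rule eC_Un[OF d12 fC])
    also have "eC C1 x' = - e1" unfolding x'_def e1_def by (rule eC_flip_self[OF C1N(1)])
    also have "eC C2 x' = e2" unfolding x'_def e2_def by (rule eC_flip_disj) (use d12 C1N in auto)
    finally have "eC (C1 \<union> C2) x' = e2 - e1" by simp
    then show ?thesis unfolding Nw_def using bnum_insert[OF fR mf(1), of x'] bR by simp
  qed
  have key: "2 * real (bnum Cs x) \<le> 3 + real (bnum Nw x) + real (bnum Nw x')"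
    unfolding bCs bN1 bN2 by (auto split: if_splits)
  have cardCs: "card Cs = Suc (card Nw)"
    unfolding Nw_def using mf(1,3,4,5,6) by (simp add: card_insert_disjoint)
  define P :: real where "P = 2^card Nw"
  have P0: "P > 0" unfolding P_def by simp
  define ta where "ta = (if v then t1 else t0)"
  define tb where "tb = (if \<not> v then t1 else t0)"
  define bb where "bb = real (bnum Cs x)"
  define bn1 where "bn1 = real (bnum Nw x)"
  define bn2 where "bn2 = real (bnum Nw x')"
  have h1: "2 * (P * bn1) - 2 * absS x Nw \<le> 3 * costS ta x Nw"
    using b1 unfolding bound_def ta_def P_def bn1_def by (simp add: algebra_simps)
  have h2: "2 * (P * bn2) - 2 * absS x' Nw \<le> 3 * costS tb x' Nw"
    using b2 unfolding bound_def tb_def P_def bn2_def by (simp add: algebra_simps)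
  have h3: "2 * 2^card Cs * real (bnum Cs x) = 4 * (P * bb)" unfolding cardCs P_def bb_def by simp
  have h4: "2 * (P * bb) \<le> 3 * P + P * bn1 + P * bn2"
  proof -
    have "P * (2 * bb) \<le> P * (3 + bn1 + bn2)" using key P0 unfolding bb_def bn1_def bn2_def
      by (intro mult_left_mono) auto
    then show ?thesis by (simp add: algebra_simps)
  qed
  have h5: "3 * costS (Node q t0 t1) x Cs = 6 * P + 3 * costS ta x Nw + 3 * costS tb x' Nw"
    unfolding cs e1 e2 P_def ta_def tb_def by (simp add: algebra_simps)
  have ar: "4*(u::real) - 2*(a1+a2) \<le> 6*p + 3*c1 + 3*c2"
    if "2*w1 - 2*a1 \<le> 3*c1" "2*w2 - 2*a2 \<le> 3*c2" "2*u \<le> 3*p + w1 + w2" for u w1 w2 a1 a2 c1 c2 p :: real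
    using that by (smt (verit))
  show ?thesis unfolding bound_def h3 h5 as by (rule ar[OF h1 h2 h4])
qed

lemma nth_Fx_out: "i < length x \<Longrightarrow> i \<notin> \<Union>D \<Longrightarrow> Fx x D ! i = x!i"
  by (simp add: nth_Fx)

lemma nth_Fx_in: "i < length x \<Longrightarrow> i \<in> \<Union>D \<Longrightarrow> Fx x D ! i = (\<not> x!i)"
  by (simp add: nth_Fx)

lemma good_if: "good N t0 \<Longrightarrow> good N t1 \<Longrightarrow> good N (if v then t1 else t0)"
  by simp

lemma bit_case:
  assumes g0: "good N t0" and g1: "good N t1" and len: "length x = N" and wf: "wfam N Cs"
    and cor: "correct (Node (Bit i) t0 t1) x Cs" and iN: "i < N"
  shows "bound (Node (Bit i) t0 t1) x Cs"
proof (cases "\<exists>C\<in>Cs. i \<in> C")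
  case True
  then obtain C where C: "C \<in> Cs" "i \<in> C" by blast
  show ?thesis
  proof (rule split_case[OF g0 g1 len wf C(1) cor, of "x!i"], intro ballI)
    fix D assume D: "D \<in> Pow (Cs - {C})"
    then have "i \<notin> \<Union>D" using mem_Union_iff[OF wf C, of D] by auto
    moreover have "i \<in> C" using C by simp
    ultimately show "answer (Bit i) (Fx x D) = x!i \<and> answer (Bit i) (Fx (flip C x) D) = (\<not> x!i)"
      using iN len by (simp add: nth_Fx)
  qed
next
  case False
  show ?thesis
  proof (rule const_case[OF good_if[OF g0 g1] len wf cor, of "x!i"], intro ballI)
    fix D assume D: "D \<in> Pow Cs"
    then have "i \<notin> \<Union>D" using False by auto
    then show "answer (Bit i) (Fx x D) = x!i" using iN len by (simp add: nth_Fx)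
  qed
qed

lemma xor_case:
  assumes g0: "good N t0" and g1: "good N t1" and len: "length x = N" and wf: "wfam N Cs"
    and cor: "correct (Node (Xor i j) t0 t1) x Cs" and iN: "i < N" and jN: "j < N"
  shows "bound (Node (Xor i j) t0 t1) x Cs"
proof -
  define v where "v = (x!i \<noteq> x!j)"
  have il: "i < length x" and jl: "j < length x" using iN jN len by auto
  show ?thesis
  proof (cases "\<exists>C\<in>Cs. i \<in> C")
    case True
    then obtain C1 where C1: "C1 \<in> Cs" "i \<in> C1" by blast
    show ?thesis
    proof (cases "\<exists>C\<in>Cs. j \<in> C")
      case True
      then obtain C2 where C2: "C2 \<in> Cs" "j \<in> C2" by blast
      show ?thesis
      proof (cases "C1 = C2")
        case True
        show ?thesis
        proof (rule const_case[OF good_if[OF g0 g1] len wf cor, of v], intro ballI)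
          fix D assume D: "D \<in> Pow Cs"
          then have "i \<in> \<Union>D \<longleftrightarrow> j \<in> \<Union>D"
            using mem_Union_iff[OF wf C1, of D] mem_Union_iff[OF wf C2, of D] True by auto
          then show "answer (Xor i j) (Fx x D) = v" unfolding v_def using il jl by (auto simp: nth_Fx)
        qed
      next
        case False
        define Nw where "Nw = insert (C1 \<union> C2) (Cs - {C1, C2})"
        have wfNw: "wfam N Nw" unfolding Nw_def by (rule merge_facts(2)[OF wf C1(1) C2(1) False])
        have inNw: "C1 \<union> C2 \<in> Nw" unfolding Nw_def by simp
        have jC1: "j \<notin> C1" using wfam_disj[OF wf C1(1) C2(1) False] C2(2) by auto
        show ?thesis
        proof (rule merge_case[OF g0 g1 len wf C1(1) C2(1) False cor, of v, folded Nw_def], intro ballI)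
          fix D assume D: "D \<in> Pow Nw"
          then have "i \<in> \<Union>D \<longleftrightarrow> j \<in> \<Union>D"
            using mem_Union_iff[OF wfNw inNw, of i D] mem_Union_iff[OF wfNw inNw, of j D] C1(2) C2(2) by auto
          then show "answer (Xor i j) (Fx x D) = v \<and> answer (Xor i j) (Fx (flip C1 x) D) = (\<not> v)"
            unfolding v_def using il jl C1(2) jC1 by (auto simp: nth_Fx)
        qed
      qed
    next
      case False
      show ?thesis
      proof (rule split_case[OF g0 g1 len wf C1(1) cor, of v], intro ballI)
        fix D assume D: "D \<in> Pow (Cs - {C1})"
        then have "i \<notin> \<Union>D" using mem_Union_iff[OF wf C1, of D] by auto
        moreover have "j \<notin> \<Union>D" "j \<notin> C1" using False D C1 by auto
        ultimately show "answer (Xor i j) (Fx x D) = v \<and> answer (Xor i j) (Fx (flip C1 x) D) = (\<not> v)"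
          unfolding v_def using il jl C1(2) by (auto simp: nth_Fx)
      qed
    qed
  next
    case False
    note iF = False
    show ?thesis
    proof (cases "\<exists>C\<in>Cs. j \<in> C")
      case True
      then obtain C2 where C2: "C2 \<in> Cs" "j \<in> C2" by blast
      show ?thesis
      proof (rule split_case[OF g0 g1 len wf C2(1) cor, of v], intro ballI)
        fix D assume D: "D \<in> Pow (Cs - {C2})"
        then have "j \<notin> \<Union>D" using mem_Union_iff[OF wf C2, of D] by auto
        moreover have "i \<notin> \<Union>D" "i \<notin> C2" using iF D C2 by auto
        ultimately show "answer (Xor i j) (Fx x D) = v \<and> answer (Xor i j) (Fx (flip C2 x) D) = (\<not> v)"
          unfolding v_def using il jl C2(2) by (auto simp: nth_Fx)
      qed
    next
      case False
      show ?thesis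
      proof (rule const_case[OF good_if[OF g0 g1] len wf cor, of v], intro ballI)
        fix D assume D: "D \<in> Pow Cs"
        then have "i \<notin> \<Union>D" "j \<notin> \<Union>D" using iF False by auto
        then show "answer (Xor i j) (Fx x D) = v" unfolding v_def using il jl by (simp add: nth_Fx)
      qed
    qed
  qed
qed

lemma leaf_good: "good N (Leaf v)"
  unfolding good_def
proof (intro allI impI)
  fix x Cs assume len: "length x = N" and wf: "wfam N Cs" and cor: "correct (Leaf v) x Cs"
  have m: "\<forall>D\<in>Pow Cs. majority (Fx x D) = v" using cor unfolding correct_def by simp
  have "2^card Cs * int (bnum Cs x) \<le> (\<Sum>D\<in>Pow Cs. \<bar>Ssum (Fx x D)\<bar>)"
    by (rule leaf_bound[OF wf len m])
  then have "real_of_int (2^card Cs * int (bnum Cs x)) \<le> real_of_int (\<Sum>D\<in>Pow Cs. \<bar>Ssum (Fx x D)\<bar>)"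
    by (simp only: of_int_le_iff)
  then have "2^card Cs * real (bnum Cs x) \<le> absS x Cs" unfolding absS_def by simp
  moreover have "costS (Leaf v) x Cs = 0" unfolding costS_def by simp
  ultimately show "bound (Leaf v) x Cs" unfolding bound_def by simp
qed

lemma good_all: "valid_tree N T \<Longrightarrow> good N T"
proof (induction T)
  case (Leaf v)
  show ?case by (rule leaf_good)
next
  case (Node q t0 t1)
  have v: "query_ok N q" "valid_tree N t0" "valid_tree N t1" using Node.prems by auto
  have g0: "good N t0" and g1: "good N t1" using Node.IH v by auto
  show ?case
    unfolding good_def
  proof (intro allI impI)
    fix x Cs assume len: "length x = N" and wf: "wfam N Cs" and cor: "correct (Node q t0 t1) x Cs"
    show "bound (Node q t0 t1) x Cs"
    proof (cases q)
      case (Bit i)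
      then show ?thesis using bit_case[OF g0 g1 len wf] cor v(1) by simp
    next
      case (Xor i j)
      then show ?thesis using xor_case[OF g0 g1 len wf] cor v(1) by simp
    qed
  qed
qed

definition Cs0 :: "nat \<Rightarrow> nat set set" where "Cs0 N = (\<lambda>i. {i}) ` {..<N}"

lemma wfam_Cs0: "wfam N (Cs0 N)"
  unfolding wfam_def Cs0_def by auto

lemma card_Cs0: "card (Cs0 N) = N"
  unfolding Cs0_def by (subst card_image) (auto simp: inj_on_def)

lemma bnum_Cs0: "bnum (Cs0 N) (replicate N False) = N"
proof -
  have "{C\<in>Cs0 N. eC C (replicate N False) \<noteq> 0} = Cs0 N"
    unfolding Cs0_def eC_def by (auto simp: sg_def)
  then show ?thesis unfolding bnum_def using card_Cs0 by simp
qed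

lemma bij_Cs0: "bij_betw Union (Pow (Cs0 N)) (Pow {..<N})"
  unfolding bij_betw_def
proof
  show "inj_on Union (Pow (Cs0 N))"
  proof (rule inj_onI)
    fix A B assume A: "A \<in> Pow (Cs0 N)" and B: "B \<in> Pow (Cs0 N)" and e: "\<Union>A = \<Union>B"
    have "X \<in> A \<longleftrightarrow> X \<in> B" if xin: "X \<in> Cs0 N" for X
    proof -
      obtain i where X: "X = {i}" using xin unfolding Cs0_def by auto
      have "{i} \<in> A \<longleftrightarrow> i \<in> \<Union>A" using A unfolding Cs0_def by auto
      moreover have "{i} \<in> B \<longleftrightarrow> i \<in> \<Union>B" using B unfolding Cs0_def by auto
      ultimately show ?thesis using e X by simp
    qed
    then show "A = B" using A B by blast
  qed
  show "Union ` Pow (Cs0 N) = Pow {..<N}"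
  proof
    show "Union ` Pow (Cs0 N) \<subseteq> Pow {..<N}" unfolding Cs0_def by auto
    show "Pow {..<N} \<subseteq> Union ` Pow (Cs0 N)"
    proof
      fix U assume U: "U \<in> Pow {..<N}"
      have "U = \<Union>((\<lambda>i. {i}) ` U)" by auto
      moreover have "(\<lambda>i. {i}) ` U \<in> Pow (Cs0 N)" using U unfolding Cs0_def by auto
      ultimately show "U \<in> Union ` Pow (Cs0 N)" by blast
    qed
  qed
qed

lemma Ssum_rep: assumes "U \<subseteq> {..<N}" shows "Ssum (flip U (replicate N False)) = 2 * int (card U) - int N"
proof -
  have fU: "finite U" using assms finite_subset by blast
  define R where "R = {..<N} - U"
  have u: "{..<N} = U \<union> R" using assms unfolding R_def by auto
  have "Ssum (flip U (replicate N False)) = (\<Sum>i<N. sg (i \<in> U))"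
    unfolding Ssum_def by (rule sum.cong) auto
  also have "\<dots> = (\<Sum>i\<in>U. sg (i \<in> U)) + (\<Sum>i\<in>R. sg (i \<in> U))"
    unfolding u by (rule sum.union_disjoint) (use fU in \<open>auto simp: R_def\<close>)
  also have "(\<Sum>i\<in>U. sg (i \<in> U)) = int (card U)" by (simp add: sg_def)
  also have "(\<Sum>i\<in>R. sg (i \<in> U)) = - int (card R)" by (simp add: sg_def R_def)
  also have "card R = N - card U" unfolding R_def using assms fU by (simp add: card_Diff_subset)
  also have "int (N - card U) = int N - int (card U)"
    using card_mono[OF _ assms] by simp
  finally show ?thesis by simp
qed

definition VV :: "nat \<Rightarrow> int" where "VV N = (\<Sum>U\<in>Pow {..<N}. \<bar>2 * int (card U) - int N\<bar>)"

lemma abs_pm: "\<bar>s - 1\<bar> + \<bar>s + 1\<bar> = 2 * \<bar>s\<bar> + (if s = 0 then 2 else (0::int))"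
  by auto

lemma card_half: "card {U\<in>Pow {..<N}. 2 * int (card U) - int N = 0} = (if even N then N choose (N div 2) else 0)"
proof (cases "even N")
  case True
  have "{U\<in>Pow {..<N}. 2 * int (card U) - int N = 0} = {U. U \<subseteq> {..<N} \<and> card U = N div 2}"
    using True by auto
  then show ?thesis using True n_subsets[of "{..<N}" "N div 2"] by simp
next
  case False
  have "{U\<in>Pow {..<N}. 2 * int (card U) - int N = 0} = {}"
  proof -
    have "2 * int (card U) - int N \<noteq> 0" for U
    proof
      assume "2 * int (card U) - int N = 0"
      then have "N = 2 * card U" by linarith
      then show False using False by simp
    qed
    then show ?thesis by auto
  qed
  then show ?thesis using False by simp
qed

lemma VV_Suc: "VV (Suc N) = 2 * VV N + 2 * int (if even N then N choose (N div 2) else 0)"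
proof -
  have fin: "finite {..<N}" by simp
  have nin: "N \<notin> {..<N}" by simp
  have e: "{..<Suc N} = insert N {..<N}" by auto
  have "VV (Suc N) = (\<Sum>U\<in>Pow {..<N}. \<bar>2 * int (card U) - int (Suc N)\<bar>) +
        (\<Sum>U\<in>Pow {..<N}. \<bar>2 * int (card (insert N U)) - int (Suc N)\<bar>)"
    unfolding VV_def e by (rule pow_insert_sum[OF fin nin])
  also have "(\<Sum>U\<in>Pow {..<N}. \<bar>2 * int (card (insert N U)) - int (Suc N)\<bar>) =
      (\<Sum>U\<in>Pow {..<N}. \<bar>(2 * int (card U) - int N) + 1\<bar>)"
  proof (rule sum.cong)
    fix U assume U: "U \<in> Pow {..<N}"
    then have "finite U" "N \<notin> U" using finite_subset by auto
    then show "\<bar>2 * int (card (insert N U)) - int (Suc N)\<bar> = \<bar>(2 * int (card U) - int N) + 1\<bar>" by simp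
  qed simp
  also have "(\<Sum>U\<in>Pow {..<N}. \<bar>2 * int (card U) - int (Suc N)\<bar>) = (\<Sum>U\<in>Pow {..<N}. \<bar>(2 * int (card U) - int N) - 1\<bar>)"
    by (rule sum.cong) auto
  finally have "VV (Suc N) = (\<Sum>U\<in>Pow {..<N}. \<bar>(2 * int (card U) - int N) - 1\<bar> + \<bar>(2 * int (card U) - int N) + 1\<bar>)"
    by (simp add: sum.distrib)
  also have "\<dots> = (\<Sum>U\<in>Pow {..<N}. 2 * \<bar>2 * int (card U) - int N\<bar> + (if 2 * int (card U) - int N = 0 then 2 else 0))"
    by (rule sum.cong) (simp_all only: abs_pm)
  also have "\<dots> = 2 * VV N + (\<Sum>U\<in>Pow {..<N}. (if 2 * int (card U) - int N = 0 then 2 else 0))"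
    unfolding VV_def by (simp add: sum.distrib sum_distrib_left)
  also have "(\<Sum>U\<in>Pow {..<N}. (if 2 * int (card U) - int N = 0 then 2 else (0::int))) =
      (\<Sum>U\<in>{U\<in>Pow {..<N}. 2 * int (card U) - int N = 0}. 2)"
    by (rule sum.inter_filter[symmetric]) simp
  also have "\<dots> = 2 * int (card {U\<in>Pow {..<N}. 2 * int (card U) - int N = 0})" by simp
  finally show ?thesis unfolding card_half by simp
qed

lemma VV_zz: "real_of_int (VV N) = 2^N * zz N"
proof (induction N)
  case 0 then show ?case by (simp add: VV_def)
next
  case (Suc N)
  have "real_of_int (VV (Suc N)) = 2 * (2^N * zz N) + 2 * real (if even N then N choose (N div 2) else 0)"
    unfolding VV_Suc using Suc by simp
  also have "\<dots> = 2^Suc N * zz (Suc N)"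
  proof (cases "even N")
    case True
    then obtain m where m: "N = 2*m" by blast
    have "(4::real)^m = 2^N" unfolding m by (simp add: power_mult)
    then have "2^Suc N * ca (N div 2) = 2 * real (N choose (N div 2))"
      unfolding ca_def using m by simp
    then show ?thesis using True by (simp add: algebra_simps)
  next
    case False then show ?thesis by simp
  qed
  finally show ?case .
qed

lemma absS_Cs0: "absS (replicate N False) (Cs0 N) = 2^N * zz N"
proof -
  have "absS (replicate N False) (Cs0 N) = (\<Sum>D\<in>Pow (Cs0 N). real_of_int \<bar>2 * int (card (\<Union>D)) - int N\<bar>)"
    unfolding absS_def Fx_def
  proof (rule sum.cong)
    fix D assume "D \<in> Pow (Cs0 N)"
    then have "\<Union>D \<subseteq> {..<N}" unfolding Cs0_def by auto
    then show "\<bar>real_of_int (Ssum (flip (\<Union>D) (replicate N False)))\<bar> = real_of_int \<bar>2 * int (card (\<Union>D)) - int N\<bar>"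
      using Ssum_rep by simp
  qed simp
  also have "\<dots> = (\<Sum>U\<in>Pow {..<N}. real_of_int \<bar>2 * int (card U) - int N\<bar>)"
    by (rule sum.reindex_bij_betw[OF bij_Cs0])
  also have "\<dots> = real_of_int (VV N)" unfolding VV_def by simp
  finally show ?thesis using VV_zz by simp
qed

lemma det_bound:
  assumes "valid_tree N T" "\<forall>X. length X = N \<longrightarrow> run T X = majority X"
  shows "2 * 2^N * real N - 2 * (2^N * zz N) \<le> 3 * (\<Sum>D\<in>Pow (Cs0 N). real (cost T (Fx (replicate N False) D)))"
proof -
  have g: "good N T" by (rule good_all[OF assms(1)])
  have c: "correct T (replicate N False) (Cs0 N)" unfolding correct_def using assms(2) by simp
  have "bound T (replicate N False) (Cs0 N)" using g c wfam_Cs0 unfolding good_def by simp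
  then show ?thesis unfolding bound_def card_Cs0 bnum_Cs0 absS_Cs0 costS_def .
qed

lemma sqrt_identity: "sqrt (8 * real N / (9 * pi)) = 2/3 * sqrt (2 * real N / pi)"
proof -
  have e: "8 * real N / (9 * pi) = (2/3)^2 * (2 * real N / pi)" by (simp add: field_simps power2_eq_square)
  have "sqrt ((2/3)^2 * (2 * real N / pi)) = sqrt ((2/3)^2) * sqrt (2 * real N / pi)"
    by (rule real_sqrt_mult)
  also have "sqrt ((2/3::real)^2) = 2/3" by simp
  finally show ?thesis unfolding e .
qed

lemma ennreal_avg:
  fixes f :: "'i \<Rightarrow> ennreal"
  assumes fin: "finite I" and ne: "I \<noteq> {}" and S: "ennreal B \<le> (\<Sum>i\<in>I. f i)" and r: "r * real (card I) \<le> B"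
  shows "\<exists>i\<in>I. ennreal r \<le> f i"
proof -
  obtain m where m: "m \<in> I" "\<forall>i\<in>I. f i \<le> f m"
  proof -
    have "Max (f ` I) \<in> f ` I" using fin ne by simp
    then obtain m where "m \<in> I" "f m = Max (f ` I)" by auto
    moreover have "\<forall>i\<in>I. f i \<le> Max (f ` I)" using fin by simp
    ultimately show ?thesis using that by metis
  qed
  have "(\<Sum>i\<in>I. f i) \<le> of_nat (card I) * f m" by (rule sum_bounded_above) (use m in auto)
  then have le: "ennreal B \<le> of_nat (card I) * f m" using S by (rule order.trans[rotated])
  have cpos: "card I > 0" using fin ne by (simp add: card_gt_0_iff)
  show ?thesis
  proof (cases "r \<le> 0")
    case True
    then have "ennreal r = 0" by (rule ennreal_neg)
    then show ?thesis using m(1) by (intro bexI[of _ m]) simp_all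
  next
    case False
    show ?thesis
    proof (cases "f m = top")
      case True then show ?thesis using m(1) by (intro bexI[of _ m]) simp_all
    next
      case ntop: False
      then obtain y where y: "f m = ennreal y" "y \<ge> 0" by (cases "f m") auto
      have "of_nat (card I) * f m = ennreal (real (card I) * y)"
        unfolding y(1) ennreal_of_nat_eq_real_of_nat using y(2) by (simp add: ennreal_mult)
      with le have "ennreal B \<le> ennreal (real (card I) * y)" by simp
      then have "B \<le> real (card I) * y" using y(2) by (subst (asm) ennreal_le_iff) auto
      then have "r * real (card I) \<le> y * real (card I)" using r by (simp add: algebra_simps)
      then have "r \<le> y" using cpos by simp
      then show ?thesis using m(1) y(1) by (intro bexI[of _ m]) (simp_all add: ennreal_leI)
    qed
  qed
qed

theorem mainTheorem13:
  shows "\<exists>d::real. \<forall>N::nat. \<forall>D::xtree pmf. N \<ge> 1 \<longrightarrow> rand_computes_exactly N D majority \<longrightarrow>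
     (\<exists>X. length X = N \<and>
        expected_cost D X \<ge> ennreal (2/3 * real N - sqrt (8 * real N / (9 * pi)) - d))"
proof (intro exI[of _ 1] allI impI)
  fix N :: nat and D :: "xtree pmf"
  assume N1: "N \<ge> 1" and rce: "rand_computes_exactly N D majority"
  have val: "\<forall>T\<in>set_pmf D. valid_tree N T" using rce unfolding rand_computes_exactly_def by simp
  have cor: "\<forall>T\<in>set_pmf D. \<forall>X. length X = N \<longrightarrow> run T X = majority X"
  proof (intro ballI allI impI)
    fix T and X :: "bool list" assume T: "T \<in> set_pmf D" and X: "length X = N"
    have "measure_pmf.prob D {T. run T X = majority X} = 1" using rce X unfolding rand_computes_exactly_def by simp
    then have "AE T in measure_pmf D. T \<in> {T. run T X = majority X}" by (rule measure_pmf.AE_prob_1)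
    then show "run T X = majority X" using T unfolding AE_measure_pmf_iff by simp
  qed
  define I where "I = Pow (Cs0 N)"
  define Xf where "Xf Dd = Fx (replicate N False) Dd" for Dd
  define B where "B = (2 * 2^N * real N - 2 * (2^N * zz N)) / 3"
  have finI: "finite I" unfolding I_def Cs0_def by simp
  have neI: "I \<noteq> {}" unfolding I_def by auto
  have cardI: "card I = 2^N" unfolding I_def using finI card_Cs0[of N]
    by (simp add: card_Pow Cs0_def)
  have detT: "B \<le> (\<Sum>Dd\<in>I. real (cost T (Xf Dd)))" if "T \<in> set_pmf D" for T
    using det_bound[of N T] val cor that unfolding B_def I_def Xf_def by simp
  have "(\<Sum>Dd\<in>I. expected_cost D (Xf Dd)) = (\<integral>\<^sup>+ T. (\<Sum>Dd\<in>I. ennreal (real (cost T (Xf Dd)))) \<partial>measure_pmf D)"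
    unfolding expected_cost_def by (rule nn_integral_sum[symmetric]) simp
  also have "\<dots> = (\<integral>\<^sup>+ T. ennreal (\<Sum>Dd\<in>I. real (cost T (Xf Dd))) \<partial>measure_pmf D)"
    by (rule nn_integral_cong) (simp add: sum_ennreal)
  also have "\<dots> \<ge> (\<integral>\<^sup>+ T. ennreal B \<partial>measure_pmf D)"
    by (rule nn_integral_mono_AE) (use detT in \<open>auto simp: AE_measure_pmf_iff intro: ennreal_leI\<close>)
  also have "(\<integral>\<^sup>+ T. ennreal B \<partial>measure_pmf D) = ennreal B"
    by (simp add: measure_pmf.emeasure_space_1)
  finally have S: "ennreal B \<le> (\<Sum>Dd\<in>I. expected_cost D (Xf Dd))" .
  define r where "r = 2/3 * real N - sqrt (8 * real N / (9 * pi)) - 1"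
  have rB: "r * real (card I) \<le> B"
  proof -
    have z: "zz N \<le> sqrt (2 * real N / pi) + 1" by (rule zz_bound)
    have "r \<le> (2 * real N - 2 * zz N) / 3" unfolding r_def sqrt_identity using z by simp
    then have "r * 2^N \<le> (2 * real N - 2 * zz N) / 3 * 2^N" by (rule mult_right_mono) simp
    also have "\<dots> = B" unfolding B_def by (simp add: algebra_simps)
    finally show ?thesis unfolding cardI by simp
  qed
  obtain Dd where Dd: "Dd \<in> I" "ennreal r \<le> expected_cost D (Xf Dd)"
    using ennreal_avg[OF finI neI S rB] by blast
  show "\<exists>X. length X = N \<and> ennreal (2/3 * real N - sqrt (8 * real N / (9 * pi)) - 1) \<le> expected_cost D X"
    using Dd unfolding r_def by (intro exI[of _ "Xf Dd"]) (simp add: Xf_def)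
qed

end
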